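(* Let $\beta$ be any online throttling strategy (specified for every horizon $T$). For any $\mu>\rho/\bar v$, \[\liminf_{T\to\infty,\ B=\rho T}\ \inf_{\bm v,\,G}\ \frac1T\,\mathbb E_{\bm p\sim G^T,\ \bm\gamma}\Big[R^\beta(\bm v,\bm p,\bm\gamma)-\mu\cdot R^{\mathrm{H}}(\bm v,\bm p)\Big]<0,\] where the infimum is over value sequences $\bm v\in[0,\bar v]^T$ and distributions $G$ on $[0,\bar v]$.
   Context: Repeated second-price auctions with a single budget-constrained buyer. Constants $\bar v>0$ and $\rho\in(0,\bar v]$. There are $T$ rounds and total budget $B=\rho T$. In round $t$ the buyer has value $v_t\in[0,\bar v]$ (here an arbitrary, adversarially chosen sequence $\bm v=(v_t)$), and the highest competing bid $p_t$ is drawn i.i.d. from a distribution $G$ on $[0,\bar v]$ unknown to the buyer. After seeing $v_t$ the buyer chooses $x_t\in\{0,1\}$ and obtains revenue $x_tr_t$ and pays $x_tc_t$, with $r_t=(v_t-p_t)^+$, $c_t=p_t\mathbf 1[v_t\ge p_t]$. An online throttling strategy sets $x_t=\beta_t(\mathcal H_t,v_t,\gamma_t)$ with internal randomness $\gamma_t$ and history $\mathcal H_t=(v_\tau,x_\tau,p_\tau)_{\tau<t}$ (full information) or $(v_\tau,x_\tau,x_\tau p_\tau)_{\tau<t}$ (partial information); total payment must stay within $B$. With $T_0$ the last round with $x_t=1$, the total revenue is $R^\beta(\bm v,\bm p,\bm\gamma)=\sum_{t=1}^{T_0}x_tr_t$. The hindsight benchmark is $R^{\mathrm H}(\bm v,\bm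 p)=\max_{\bm x\in\{0,1\}^T}\sum_{t=1}^Tx_t(v_t-p_t)^+$ subject to $\sum_{t=1}^Tx_tp_t\mathbf 1[v_t\ge p_t]\le T\rho$. *)

theory Defs
  imports "HOL-Probability.Probability"
begin

text \<open>Rounds are indexed 0,...,T-1. A (full-information) online throttling strategy, specified
for every horizon T, is a function
  beta T t vhist xhist phist v_t gamma_t
returning the decision x_t. The histories are passed truncated to rounds < t, so the
strategy is non-anticipating by construction.\<close>

type_synonym strategy =
  "nat \<Rightarrow> nat \<Rightarrow> (nat \<Rightarrow> real) \<Rightarrow> (nat \<Rightarrow> bool) \<Rightarrow> (nat \<Rightarrow> real) \<Rightarrow> real \<Rightarrow> real \<Rightarrow> bool"

definition trunc :: "nat \<Rightarrow> (nat \<Rightarrow> real) \<Rightarrow> nat \<Rightarrow> real" where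
  "trunc n f = (\<lambda>\<tau>. if \<tau> < n then f \<tau> else 0)"

primrec xhist :: "strategy \<Rightarrow> nat \<Rightarrow> (nat \<Rightarrow> real) \<Rightarrow> (nat \<Rightarrow> real) \<Rightarrow> (nat \<Rightarrow> real) \<Rightarrow> nat \<Rightarrow> nat \<Rightarrow> bool" where
  "xhist \<beta> T v p \<gamma> 0 = (\<lambda>_. False)"
| "xhist \<beta> T v p \<gamma> (Suc n) =
     (let h = xhist \<beta> T v p \<gamma> n
      in h(n := \<beta> T n (trunc n v) h (trunc n p) (v n) (\<gamma> n)))"

definition decision :: "strategy \<Rightarrow> nat \<Rightarrow> (nat \<Rightarrow> real) \<Rightarrow> (nat \<Rightarrow> real) \<Rightarrow> (nat \<Rightarrow> real) \<Rightarrow> nat \<Rightarrow> bool" where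
  "decision \<beta> T v p \<gamma> = xhist \<beta> T v p \<gamma> T"

definition gain :: "real \<Rightarrow> real \<Rightarrow> real" where
  "gain v p = max (v - p) 0"

definition cost :: "real \<Rightarrow> real \<Rightarrow> real" where
  "cost v p = (if v \<ge> p then p else 0)"

definition revenue :: "strategy \<Rightarrow> nat \<Rightarrow> (nat \<Rightarrow> real) \<Rightarrow> (nat \<Rightarrow> real) \<Rightarrow> (nat \<Rightarrow> real) \<Rightarrow> real" where
  "revenue \<beta> T v p \<gamma> = (\<Sum>t<T. if decision \<beta> T v p \<gamma> t then gain (v t) (p t) else 0)"

definition payment :: "strategy \<Rightarrow> nat \<Rightarrow> (nat \<Rightarrow> real) \<Rightarrow> (nat \<Rightarrow> real) \<Rightarrow> (nat \<Rightarrow> real) \<Rightarrow> real" where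
  "payment \<beta> T v p \<gamma> = (\<Sum>t<T. if decision \<beta> T v p \<gamma> t then cost (v t) (p t) else 0)"

text \<open>Hindsight benchmark: x in {0,1}^T represented by the set S of rounds with x_t = 1.\<close>
definition hindsight :: "real \<Rightarrow> nat \<Rightarrow> (nat \<Rightarrow> real) \<Rightarrow> (nat \<Rightarrow> real) \<Rightarrow> real" where
  "hindsight \<rho> T v p = Max {(\<Sum>t\<in>S. gain (v t) (p t)) | S. S \<subseteq> {..<T} \<and> (\<Sum>t\<in>S. cost (v t) (p t)) \<le> real T * \<rho>}"

definition distr_on :: "real \<Rightarrow> real measure \<Rightarrow> bool" where
  "distr_on vbar G \<longleftrightarrow> prob_space G \<and> sets G = sets borel \<and> emeasure G {0..vbar} = 1"

definition budget_feasible :: "real \<Rightarrow> real \<Rightarrow> strategy \<Rightarrow> bool" where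
  "budget_feasible vbar \<rho> \<beta> \<longleftrightarrow>
     (\<forall>T v p \<gamma>. (\<forall>t<T. v t \<in> {0..vbar}) \<longrightarrow> (\<forall>t<T. p t \<in> {0..vbar}) \<longrightarrow>
        payment \<beta> T v p \<gamma> \<le> \<rho> * real T)"

text \<open>Probability space of (p, gamma): p ~ G^T i.i.d., gamma_t i.i.d. ~ Gam T (strategy's
internal randomness), independent.\<close>
definition outcome_space :: "nat \<Rightarrow> real measure \<Rightarrow> real measure \<Rightarrow> ((nat \<Rightarrow> real) \<times> (nat \<Rightarrow> real)) measure" where
  "outcome_space T G Gam = (PiM {..<T} (\<lambda>_. G)) \<Otimes>\<^sub>M (PiM {..<T} (\<lambda>_. Gam))"

definition measurable_strategy :: "strategy \<Rightarrow> (nat \<Rightarrow> real measure) \<Rightarrow> bool" where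
  "measurable_strategy \<beta> Gam \<longleftrightarrow>
     (\<forall>T v t. t < T \<longrightarrow>
        (\<lambda>\<omega>. decision \<beta> T v (fst \<omega>) (snd \<omega>) t)
          \<in> measurable (outcome_space T borel (Gam T)) (count_space UNIV))"

definition objective :: "real \<Rightarrow> real \<Rightarrow> strategy \<Rightarrow> (nat \<Rightarrow> real measure) \<Rightarrow> nat \<Rightarrow> (nat \<Rightarrow> real) \<Rightarrow> real measure \<Rightarrow> real" where
  "objective \<rho> \<mu> \<beta> Gam T v G =
     (1 / real T) * (\<integral>\<omega>. revenue \<beta> T v (fst \<omega>) (snd \<omega>) - \<mu> * hindsight \<rho> T v (fst \<omega>)
                          \<partial>(outcome_space T G (Gam T)))"

definition worst_case :: "real \<Rightarrow> real \<Rightarrow> real \<Rightarrow> strategy \<Rightarrow> (nat \<Rightarrow> real measure) \<Rightarrow> nat \<Rightarrow> real" where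
  "worst_case vbar \<rho> \<mu> \<beta> Gam T =
     (INF vG \<in> {(v, G). (\<forall>t<T. v t \<in> {0..vbar}) \<and> distr_on vbar G}.
        objective \<rho> \<mu> \<beta> Gam T (fst vG) (snd vG))"

end

theory Submission
  imports Defs
begin

lemma indep_coord:
  fixes G :: "real measure" and g \<phi> :: "_ \<Rightarrow> real"
  assumes G: "prob_space G" and I: "finite I" "t \<in> I"
    and gm: "g \<in> borel_measurable (PiM I (\<lambda>_. G))"
    and gb: "\<And>x. \<bar>g x\<bar> \<le> B"
    and pm: "\<phi> \<in> borel_measurable G"
    and pb: "\<And>y. \<bar>\<phi> y\<bar> \<le> C"
    and inv: "\<And>x y y'. g (x(t:=y)) = g (x(t:=y'))"
  shows "(\<integral>x. g x * \<phi> (x t) \<partial>PiM I (\<lambda>_. G)) = (\<integral>y. \<phi> y \<partial>G) * (\<integral>x. g x \<partial>PiM I (\<lambda>_. G))"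
proof -
  interpret G: prob_space G by fact
  interpret P: product_sigma_finite "\<lambda>_. G"
    by (simp add: product_sigma_finite_def G.sigma_finite_measure_axioms)
  interpret PP: prob_space "PiM I (\<lambda>_. G)"
    by (intro prob_space_PiM) (simp add: G)
  have ins: "insert t (I - {t}) = I" using I by auto
  have fin: "finite (I - {t})" "t \<notin> I - {t}" using I by auto
  have [measurable]: "(\<lambda>x. x t) \<in> measurable (PiM I (\<lambda>_. G)) G" using I by measurable
  have int1: "integrable (PiM I (\<lambda>_. G)) (\<lambda>x. g x * \<phi> (x t))"
  proof (rule PP.integrable_const_bound[where B="B*C"])
    show "AE x in Pi\<^sub>M I (\<lambda>_. G). norm (g x * \<phi> (x t)) \<le> B * C"
      using gb pb by (auto simp: abs_mult intro!: mult_mono order.trans[OF abs_ge_zero gb])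
    show "(\<lambda>x. g x * \<phi> (x t)) \<in> borel_measurable (Pi\<^sub>M I (\<lambda>_. G))"
      using gm pm by measurable
  qed
  have int2: "integrable (PiM I (\<lambda>_. G)) g"
    using gb gm by (intro PP.integrable_const_bound[where B=B]) auto
  have "(\<integral>x. g x * \<phi> (x t) \<partial>PiM I (\<lambda>_. G))
      = (\<integral>x. (\<integral>y. g (x(t:=y)) * \<phi> y \<partial>G) \<partial>PiM (I - {t}) (\<lambda>_. G))"
    using P.product_integral_insert[OF fin, of "\<lambda>x. g x * \<phi> (x t)"] int1 ins by simp
  also have "\<dots> = (\<integral>x. g (x(t:=0)) * (\<integral>y. \<phi> y \<partial>G) \<partial>PiM (I - {t}) (\<lambda>_. G))"
  proof (rule Bochner_Integration.integral_cong[OF refl])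
    fix x
    have "(\<lambda>y. g (x(t:=y)) * \<phi> y) = (\<lambda>y. g (x(t:=0)) * \<phi> y)"
      by (rule ext, subst inv[of x _ 0], rule refl)
    then show "(\<integral>y. g (x(t:=y)) * \<phi> y \<partial>G) = g (x(t:=0)) * (\<integral>y. \<phi> y \<partial>G)"
      by simp
  qed
  also have "\<dots> = (\<integral>y. \<phi> y \<partial>G) * (\<integral>x. g (x(t:=0)) \<partial>PiM (I - {t}) (\<lambda>_. G))"
    by simp
  also have "(\<integral>x. g (x(t:=0)) \<partial>PiM (I - {t}) (\<lambda>_. G)) = (\<integral>x. (\<integral>y. g (x(t:=y)) \<partial>G) \<partial>PiM (I - {t}) (\<lambda>_. G))"
  proof (rule Bochner_Integration.integral_cong[OF refl])
    fix x
    have "(\<lambda>y. g (x(t:=y))) = (\<lambda>y. g (x(t:=0)))"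
      by (rule ext, subst inv[of x _ 0], rule refl)
    then show "g (x(t:=0)) = (\<integral>y. g (x(t:=y)) \<partial>G)"
      by (simp add: G.prob_space)
  qed
  also have "\<dots> = (\<integral>x. g x \<partial>PiM I (\<lambda>_. G))"
    using P.product_integral_insert[OF fin, of g] int2 ins by simp
  finally show ?thesis .
qed

lemma indep_coord_pair:
  fixes G :: "real measure" and C :: "'c measure" and h :: "_ \<Rightarrow> real" and \<phi> :: "real \<Rightarrow> real"
  assumes G: "prob_space G" and Cp: "prob_space C" and I: "finite I" "t \<in> I"
    and hm: "h \<in> borel_measurable (PiM I (\<lambda>_. G) \<Otimes>\<^sub>M C)"
    and hb: "\<And>\<omega>. \<bar>h \<omega>\<bar> \<le> B"
    and pm: "\<phi> \<in> borel_measurable G"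
    and pb: "\<And>y. \<bar>\<phi> y\<bar> \<le> D"
    and inv: "\<And>x y y' c. h (x(t:=y), c) = h (x(t:=y'), c)"
  shows "(\<integral>\<omega>. h \<omega> * \<phi> (fst \<omega> t) \<partial>(PiM I (\<lambda>_. G) \<Otimes>\<^sub>M C)) = (\<integral>y. \<phi> y \<partial>G) * (\<integral>\<omega>. h \<omega> \<partial>(PiM I (\<lambda>_. G) \<Otimes>\<^sub>M C))"
proof -
  interpret G: prob_space G by fact
  interpret C: prob_space C by fact
  interpret PP: prob_space "PiM I (\<lambda>_. G)"
    by (intro prob_space_PiM) (simp add: G)
  interpret PC: pair_sigma_finite "PiM I (\<lambda>_. G)" C
    by (simp add: pair_sigma_finite_def PP.sigma_finite_measure_axioms C.sigma_finite_measure_axioms)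
  interpret PCp: prob_space "PiM I (\<lambda>_. G) \<Otimes>\<^sub>M C"
    by (intro prob_space_pair) (simp_all add: PP.prob_space_axioms Cp)
  have [measurable]: "(\<lambda>x. x t) \<in> measurable (PiM I (\<lambda>_. G)) G" using I by measurable
  have [measurable]: "h \<in> borel_measurable (PiM I (\<lambda>_. G) \<Otimes>\<^sub>M C)" "\<phi> \<in> borel_measurable G" using hm pm by auto
  have int1: "integrable (PiM I (\<lambda>_. G) \<Otimes>\<^sub>M C) (\<lambda>\<omega>. h \<omega> * \<phi> (fst \<omega> t))"
  proof (rule PCp.integrable_const_bound[where B="B*D"])
    show "AE x in PiM I (\<lambda>_. G) \<Otimes>\<^sub>M C. norm (h x * \<phi> (fst x t)) \<le> B * D"
      using hb pb by (auto simp: abs_mult intro!: mult_mono order.trans[OF abs_ge_zero hb])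
  qed measurable
  have int2: "integrable (PiM I (\<lambda>_. G) \<Otimes>\<^sub>M C) h"
    using hb by (intro PCp.integrable_const_bound[where B=B]) auto
  define g where "g x = (\<integral>y. h (x, y) \<partial>C)" for x
  have gm: "g \<in> borel_measurable (PiM I (\<lambda>_. G))"
    unfolding g_def by (rule C.borel_measurable_lebesgue_integral) simp
  have gb: "\<bar>g x\<bar> \<le> B" for x
  proof (cases "integrable C (\<lambda>y. h (x, y))")
    case True
    have "\<bar>g x\<bar> \<le> (\<integral>y. \<bar>h (x, y)\<bar> \<partial>C)"
      unfolding g_def using integral_norm_bound[of C "\<lambda>y. h (x, y)"] by simp
    also have "\<dots> \<le> B"
      by (rule C.integral_le_const) (use hb True in auto)
    finally show ?thesis .
  next
    case False
    then have "g x = 0" unfolding g_def by (simp add: not_integrable_integral_eq)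
    then show ?thesis using hb[of "(x, undefined)"] by simp
  qed
  have ginv: "g (x(t:=y)) = g (x(t:=y'))" for x y y'
    unfolding g_def by (rule Bochner_Integration.integral_cong[OF refl], rule inv)
  have "(\<integral>\<omega>. h \<omega> * \<phi> (fst \<omega> t) \<partial>(PiM I (\<lambda>_. G) \<Otimes>\<^sub>M C))
      = (\<integral>x. (\<integral>y. h (x, y) * \<phi> (x t) \<partial>C) \<partial>PiM I (\<lambda>_. G))"
    using PC.integral_fst'[OF int1] by simp
  also have "\<dots> = (\<integral>x. g x * \<phi> (x t) \<partial>PiM I (\<lambda>_. G))"
    unfolding g_def by simp
  also have "\<dots> = (\<integral>y. \<phi> y \<partial>G) * (\<integral>x. g x \<partial>PiM I (\<lambda>_. G))"
    by (rule indep_coord[OF G I gm gb pm pb ginv])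
  also have "(\<integral>x. g x \<partial>PiM I (\<lambda>_. G)) = (\<integral>\<omega>. h \<omega> \<partial>(PiM I (\<lambda>_. G) \<Otimes>\<^sub>M C))"
    unfolding g_def using PC.integral_fst'[OF int2] by simp
  finally show ?thesis .
qed

lemma xhist_dep:
  "(\<forall>\<tau><n. p \<tau> = p' \<tau>) \<Longrightarrow> xhist \<beta> T v p \<gamma> n = xhist \<beta> T v p' \<gamma> n"
proof (induction n)
  case 0 then show ?case by simp
next
  case (Suc n)
  have "trunc n p = trunc n p'" using Suc.prems by (auto simp: trunc_def)
  moreover have "xhist \<beta> T v p \<gamma> n = xhist \<beta> T v p' \<gamma> n" using Suc by auto
  ultimately show ?case by (simp add: Let_def)
qed

lemma xhist_stable:
  "t < m \<Longrightarrow> xhist \<beta> T v p \<gamma> m t = xhist \<beta> T v p \<gamma> (Suc t) t"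
proof (induction m)
  case 0 then show ?case by simp
next
  case (Suc m)
  show ?case
  proof (cases "t = m")
    case False
    then have "t < m" using Suc.prems by simp
    then show ?thesis using Suc.IH False by (simp add: Let_def)
  qed simp
qed

lemma decision_eq:
  "t < T \<Longrightarrow> decision \<beta> T v p \<gamma> t = \<beta> T t (trunc t v) (xhist \<beta> T v p \<gamma> t) (trunc t p) (v t) (\<gamma> t)"
  unfolding decision_def using xhist_stable[of t T \<beta> T v p \<gamma>] by (simp add: Let_def)

lemma decision_dep:
  assumes "t < T" "\<forall>\<tau><t. p \<tau> = p' \<tau>"
  shows "decision \<beta> T v p \<gamma> t = decision \<beta> T v p' \<gamma> t"
proof -
  have "trunc t p = trunc t p'" using assms by (auto simp: trunc_def)
  then show ?thesis using decision_eq[OF assms(1)] xhist_dep[OF assms(2)] by metis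
qed

lemma hind_set_finite:
  "finite {f S | S. S \<subseteq> {..<(T::nat)} \<and> P S}"
  by (rule finite_subset[of _ "f ` Pow {..<T}"]) auto

lemma gain_nonneg: "0 \<le> gain v p" by (simp add: gain_def)

lemma hind_Max_form:
  assumes "\<rho> \<ge> 0"
  shows "hindsight \<rho> T v p = Max ((\<lambda>S. if (\<Sum>t\<in>S. cost (v t) (p t)) \<le> real T * \<rho> then (\<Sum>t\<in>S. gain (v t) (p t)) else 0) ` Pow {..<T})"
    (is "_ = Max (?F ` _)")
proof -
  let ?A = "{(\<Sum>t\<in>S. gain (v t) (p t)) | S. S \<subseteq> {..<T} \<and> (\<Sum>t\<in>S. cost (v t) (p t)) \<le> real T * \<rho>}"
  have finA: "finite ?A" by (rule hind_set_finite)
  have zA: "0 \<in> ?A" using assms by (auto intro!: exI[of _ "{}"])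
  have finB: "finite (?F ` Pow {..<T})" by simp
  have AB: "?A \<subseteq> ?F ` Pow {..<T}" by (auto simp: image_def intro!: bexI)
  have "Max ?A \<le> Max (?F ` Pow {..<T})"
    using zA AB finB by (intro Max_mono) auto
  moreover have "Max (?F ` Pow {..<T}) \<le> Max ?A"
  proof (rule Max.boundedI)
    show "?F ` Pow {..<T} \<noteq> {}" by (metis Pow_bottom empty_iff imageI)
    fix y assume "y \<in> ?F ` Pow {..<T}"
    then obtain S where S: "S \<subseteq> {..<T}" "y = ?F S" by auto
    show "y \<le> Max ?A"
    proof (cases "(\<Sum>t\<in>S. cost (v t) (p t)) \<le> real T * \<rho>")
      case True
      then have "y \<in> ?A" using S by auto
      then show ?thesis using finA by simp
    next
      case False
      then have "y = 0" using S by simp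
      then show ?thesis using finA zA by simp
    qed
  qed (rule finB)
  ultimately show ?thesis unfolding hindsight_def by simp
qed

lemma hind_upper:
  assumes "\<rho> \<ge> 0" "\<forall>t<T. v t \<in> {0..vbar}" "\<forall>t<T. p t \<in> {0..vbar}" "vbar \<ge> 0"
  shows "hindsight \<rho> T v p \<le> real T * vbar"
proof -
  let ?A = "{(\<Sum>t\<in>S. gain (v t) (p t)) | S. S \<subseteq> {..<T} \<and> (\<Sum>t\<in>S. cost (v t) (p t)) \<le> real T * \<rho>}"
  have finA: "finite ?A" by (rule hind_set_finite)
  have zA: "0 \<in> ?A" using assms by (auto intro!: exI[of _ "{}"])
  have "y \<le> real T * vbar" if "y \<in> ?A" for y
  proof -
    obtain S where S: "S \<subseteq> {..<T}" "y = (\<Sum>t\<in>S. gain (v t) (p t))" using \<open>y \<in> ?A\<close> by auto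
    have "y \<le> (\<Sum>t\<in>S. vbar)" unfolding S(2)
      using S(1) assms by (intro sum_mono) (force simp: gain_def)
    also have "\<dots> = real (card S) * vbar" by simp
    also have "\<dots> \<le> real T * vbar"
    proof (rule mult_right_mono)
      have "card S \<le> card {..<T}" using S(1) by (intro card_mono) auto
      then show "real (card S) \<le> real T" by simp
      show "0 \<le> vbar" by fact
    qed
    finally show ?thesis .
  qed
  then show ?thesis unfolding hindsight_def using finA zA by (intro Max.boundedI) auto
qed

lemma gain_special: "vbar > 0 \<Longrightarrow> p \<in> {0, vbar} \<Longrightarrow> gain vbar p = vbar * indicator {0} p"
  by (auto simp: gain_def)

lemma cost_special: "vbar > 0 \<Longrightarrow> p \<in> {0, vbar} \<Longrightarrow> cost vbar p = vbar * (1 - indicator {0} p)"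
  by (auto simp: cost_def)

lemma hind_special:
  assumes "vbar > 0" "\<rho> \<ge> 0" "\<forall>t<T. p t \<in> {0, vbar}"
  shows "hindsight \<rho> T (\<lambda>_. vbar) p = (\<Sum>t<T. vbar * indicator {0} (p t))"
proof -
  let ?A = "{(\<Sum>t\<in>S. gain vbar (p t)) | S. S \<subseteq> {..<T} \<and> (\<Sum>t\<in>S. cost vbar (p t)) \<le> real T * \<rho>}"
  have finA: "finite ?A" by (rule hind_set_finite)
  let ?S0 = "{t. t < T \<and> p t = 0}"
  have c0: "(\<Sum>t\<in>?S0. cost vbar (p t)) = 0" by (auto simp: cost_def intro!: sum.neutral)
  have c1: "(\<Sum>t\<in>?S0. cost vbar (p t)) \<le> real T * \<rho>" using assms(2) by (subst c0) simp
  have c2: "?S0 \<subseteq> {..<T}" by auto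
  have F1: "(\<Sum>t\<in>?S0. gain vbar (p t)) \<in> ?A" using c1 c2 by blast
  have F2: "(\<Sum>t\<in>?S0. gain vbar (p t)) = (\<Sum>t<T. vbar * indicator {0} (p t))"
  proof -
    have "(\<Sum>t<T. vbar * indicator {0} (p t)) = (\<Sum>t\<in>?S0. vbar * indicator {0} (p t))"
      by (rule sum.mono_neutral_right) auto
    also have "\<dots> = (\<Sum>t\<in>?S0. gain vbar (p t))"
      using assms(1) by (intro sum.cong) (auto simp: gain_def)
    finally show ?thesis by (rule sym)
  qed
  have mem: "(\<Sum>t<T. vbar * indicator {0} (p t)) \<in> ?A" using F1 unfolding F2 .
  have bnd: "y \<le> (\<Sum>t<T. vbar * indicator {0} (p t))" if "y \<in> ?A" for y
  proof -
    have "\<exists>S. y = (\<Sum>t\<in>S. gain vbar (p t)) \<and> S \<subseteq> {..<T} \<and> (\<Sum>t\<in>S. cost vbar (p t)) \<le> real T * \<rho>"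
      using that by (simp only: mem_Collect_eq)
    then obtain S where S: "S \<subseteq> {..<T}" "y = (\<Sum>t\<in>S. gain vbar (p t))" by (elim exE conjE) simp
    have "y = (\<Sum>t\<in>S. vbar * indicator {0} (p t))" unfolding S(2)
    proof (rule sum.cong[OF refl])
      fix t assume "t \<in> S"
      then have "t < T" using S(1) by auto
      then show "gain vbar (p t) = vbar * indicator {0} (p t)"
        using gain_special[OF assms(1)] assms(3) by blast
    qed
    also have "\<dots> \<le> (\<Sum>t<T. vbar * indicator {0} (p t))"
      by (rule sum_mono2) (use S(1) assms(1) in auto)
    finally show ?thesis .
  qed
  show ?thesis unfolding hindsight_def
    by (rule Max_eqI[OF finA bnd mem])
qed

lemma AE_fst_box:
  fixes G :: "real measure" and C :: "'c measure" and T :: nat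
  assumes G: "prob_space G" and Cp: "prob_space C" and A: "A \<in> sets G" and ae: "AE x in G. x \<in> A"
  shows "AE \<omega> in (PiM {..<T} (\<lambda>_. G) \<Otimes>\<^sub>M C). \<forall>t<T. fst \<omega> t \<in> A"
proof -
  interpret C: prob_space C by fact
  have ae1: "AE x in PiM {..<T} (\<lambda>_. G). \<forall>t\<in>{..<T}. x t \<in> A"
    by (rule AE_finite_allI) (auto intro!: AE_PiM_component G ae)
  have eq: "distr (PiM {..<T} (\<lambda>_. G) \<Otimes>\<^sub>M C) (PiM {..<T} (\<lambda>_. G)) fst = PiM {..<T} (\<lambda>_. G)"
    by (rule C.distr_pair_fst)
  have "AE x in distr (PiM {..<T} (\<lambda>_. G) \<Otimes>\<^sub>M C) (PiM {..<T} (\<lambda>_. G)) fst. \<forall>t\<in>{..<T}. x t \<in> A"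
    unfolding eq by (rule ae1)
  from AE_distrD[OF measurable_fst this] show ?thesis
    by (rule eventually_mono) simp
qed

lemma prob_space_outcome:
  assumes "prob_space G" "prob_space Gam"
  shows "prob_space (outcome_space T G Gam)"
  unfolding outcome_space_def
  by (intro prob_space_pair prob_space_PiM) (use assms in auto)

lemma objective_lower:
  assumes vb: "vbar \<ge> 0" and rho: "\<rho> \<ge> 0" and mu: "\<mu> \<ge> 0"
    and Gam: "prob_space (Gam T)" and G: "distr_on vbar G" and v: "\<forall>t<T. v t \<in> {0..vbar}"
  shows "- (\<mu> * vbar) \<le> objective \<rho> \<mu> \<beta> Gam T v G"
proof -
  have Gp: "prob_space G" and Gs: "sets G = sets borel" and G1: "emeasure G {0..vbar} = 1"
    using G by (auto simp: distr_on_def)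
  interpret G: prob_space G by fact
  interpret O: prob_space "outcome_space T G (Gam T)" by (rule prob_space_outcome[OF Gp Gam])
  have A: "{0..vbar} \<in> sets G" using Gs by simp
  have aeG: "AE x in G. x \<in> {0..vbar}"
    using G.AE_in_set_eq_1[OF A] G1 by (simp add: G.emeasure_eq_measure)
  have ae: "AE \<omega> in outcome_space T G (Gam T). \<forall>t<T. fst \<omega> t \<in> {0..vbar}"
    unfolding outcome_space_def
    by (rule AE_fst_box[OF Gp _ A aeG]) (intro prob_space_PiM, simp add: Gam)
  let ?f = "\<lambda>\<omega>. revenue \<beta> T v (fst \<omega>) (snd \<omega>) - \<mu> * hindsight \<rho> T v (fst \<omega>)"
  have bnd: "- (\<mu> * (real T * vbar)) \<le> ?f \<omega>" if "\<forall>t<T. fst \<omega> t \<in> {0..vbar}" for \<omega>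
  proof -
    have "0 \<le> revenue \<beta> T v (fst \<omega>) (snd \<omega>)"
      unfolding revenue_def by (intro sum_nonneg) (simp add: gain_nonneg)
    moreover have "hindsight \<rho> T v (fst \<omega>) \<le> real T * vbar"
      by (rule hind_upper[OF rho v that vb])
    ultimately show ?thesis using mu by (smt (verit) mult_left_mono)
  qed
  have I: "- (\<mu> * (real T * vbar)) \<le> (\<integral>\<omega>. ?f \<omega> \<partial>outcome_space T G (Gam T))"
  proof (cases "integrable (outcome_space T G (Gam T)) ?f")
    case True
    show ?thesis
      by (rule O.integral_ge_const[OF True], rule eventually_mono[OF ae bnd])
  next
    case False
    then show ?thesis using mu vb by (simp add: not_integrable_integral_eq)
  qed
  show ?thesis
  proof (cases "T = 0")
    case True
    then show ?thesis using mu vb by (simp add: objective_def)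
  next
    case False
    then have "- (\<mu> * vbar) = (1 / real T) * (- (\<mu> * (real T * vbar)))" by simp
    also have "\<dots> \<le> (1 / real T) * (\<integral>\<omega>. ?f \<omega> \<partial>outcome_space T G (Gam T))"
      by (rule mult_left_mono[OF I]) simp
    finally show ?thesis unfolding objective_def .
  qed
qed

lemma objective_upper:
  fixes vbar \<rho> \<mu> q :: real and \<beta> :: strategy and Gam :: "nat \<Rightarrow> real measure" and T :: nat
  assumes vb: "vbar > 0" and rho: "\<rho> > 0" and q: "0 < q" "q < 1" and T: "T > 0"
    and Gam: "prob_space (Gam T)" "sets (Gam T) = sets borel"
    and bf: "budget_feasible vbar \<rho> \<beta>" and ms: "measurable_strategy \<beta> Gam"
    and G_def: "G = distr (measure_pmf (bernoulli_pmf q)) borel (\<lambda>b. if b then 0 else vbar)"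
  shows "objective \<rho> \<mu> \<beta> Gam T (\<lambda>_. vbar) G \<le> q * \<rho> / (1 - q) - \<mu> * vbar * q"
proof -
  define v where "v = (\<lambda>_::nat. vbar)"
  define P where "P = PiM {..<T} (\<lambda>_. G)"
  define C where "C = PiM {..<T} (\<lambda>_. Gam T)"
  define \<Omega> where "\<Omega> = P \<Otimes>\<^sub>M C"
  have \<Omega>_eq: "outcome_space T G (Gam T) = \<Omega>" unfolding outcome_space_def \<Omega>_def P_def C_def ..
  have Gs: "sets G = sets borel" unfolding G_def by simp
  have Gp: "prob_space G" unfolding G_def
    by (rule measure_pmf.prob_space_distr) simp
  interpret G: prob_space G by (rule Gp)
  have Cp: "prob_space C" unfolding C_def by (intro prob_space_PiM) (simp add: Gam)
  have \<Omega>p: "prob_space \<Omega>" unfolding \<Omega>_def P_def C_def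
    using prob_space_outcome[OF Gp Gam(1), of T] by (simp add: outcome_space_def)
  interpret O: prob_space \<Omega> by (rule \<Omega>p)
  have sG: "space G = UNIV" using sets_eq_imp_space_eq[OF Gs] by simp
  have G0: "(\<integral>y. indicator {0} y \<partial>G) = q"
  proof -
    have "(\<integral>y. indicator {0} y \<partial>G) = measure G {0}" by (simp add: sG)
    also have "\<dots> = measure (measure_pmf (bernoulli_pmf q)) ((\<lambda>b. if b then 0 else vbar) -` {0})"
      unfolding G_def by (subst measure_distr) auto
    also have "(\<lambda>b. if b then 0 else vbar) -` {0} = {True}" using vb by (auto split: if_splits)
    also have "measure (measure_pmf (bernoulli_pmf q)) {True} = q"
      using q by (simp add: measure_pmf_single)
    finally show ?thesis .
  qed
  have aeG: "AE x in G. x \<in> {0, vbar}"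
    unfolding G_def by (subst AE_distr_iff) auto
  have ae: "AE \<omega> in \<Omega>. \<forall>t<T. fst \<omega> t \<in> {0, vbar}"
    unfolding \<Omega>_def P_def C_def by (rule AE_fst_box[OF Gp _ _ aeG]) (use Cp C_def Gs in \<open>auto intro!: borel_closed finite_imp_closed\<close>)
  have sets_eq: "sets (outcome_space T borel (Gam T)) = sets \<Omega>"
    unfolding outcome_space_def \<Omega>_def P_def C_def
    by (intro sets_pair_measure_cong sets_PiM_cong) (simp_all add: Gs)
  have pm[measurable]: "(\<lambda>\<omega>. fst \<omega> t) \<in> borel_measurable \<Omega>" for t
  proof (cases "t < T")
    case True
    have "(\<lambda>x. x t) \<in> measurable P G" unfolding P_def using True by simp
    then have "(\<lambda>x. x t) \<in> borel_measurable P" using measurable_cong_sets[OF refl Gs, of P] by blast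
    then show ?thesis unfolding \<Omega>_def by (rule measurable_compose[OF measurable_fst])
  next
    case False
    have "(\<lambda>\<omega>. fst \<omega> t) \<in> borel_measurable \<Omega> \<longleftrightarrow> (\<lambda>\<omega>. undefined::real) \<in> borel_measurable \<Omega>"
      using False by (intro Sigma_Algebra.measurable_cong) (auto simp: \<Omega>_def P_def space_pair_measure space_PiM PiE_def extensional_def)
    then show ?thesis by simp
  qed
  define D where "D t \<omega> = (t < T \<and> decision \<beta> T v (fst \<omega>) (snd \<omega>) t)" for t \<omega>
  have Dm[measurable]: "Measurable.pred \<Omega> (D t)" for t
  proof (cases "t < T")
    case True
    have "(\<lambda>\<omega>. decision \<beta> T v (fst \<omega>) (snd \<omega>) t) \<in> measurable (outcome_space T borel (Gam T)) (count_space UNIV)"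
      using ms True unfolding measurable_strategy_def by blast
    then have dm: "(\<lambda>\<omega>. decision \<beta> T v (fst \<omega>) (snd \<omega>) t) \<in> measurable \<Omega> (count_space UNIV)"
      using measurable_cong_sets[OF sets_eq refl, of "count_space UNIV"] by blast
    have eq: "D t = (\<lambda>\<omega>. decision \<beta> T v (fst \<omega>) (snd \<omega>) t)"
      using True by (auto simp: D_def fun_eq_iff)
    show ?thesis unfolding eq by (rule dm)
  next
    case False
    then show ?thesis unfolding D_def by simp
  qed

  define X where "X t \<omega> = (if D t \<omega> then 1 else 0 :: real)" for t \<omega>
  define Z where "Z t (\<omega>::(nat \<Rightarrow> real) \<times> (nat \<Rightarrow> real)) = (indicator {0::real} (fst \<omega> t) :: real)" for t \<omega>
  have Xm[measurable]: "X t \<in> borel_measurable \<Omega>" for t unfolding X_def by measurable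
  have ind_borel: "(indicator {0} :: real \<Rightarrow> real) \<in> borel_measurable borel" by measurable
  have indG: "(indicator {0} :: real \<Rightarrow> real) \<in> borel_measurable G"
    using ind_borel measurable_cong_sets[OF Gs refl, of borel] by blast
  have Zm[measurable]: "Z t \<in> borel_measurable \<Omega>" for t
    unfolding Z_def by (rule measurable_compose[OF pm ind_borel])
  have intb: "integrable \<Omega> h" if "h \<in> borel_measurable \<Omega>" "\<And>\<omega>. \<bar>h \<omega>\<bar> \<le> K" for h :: "_ \<Rightarrow> real" and K :: real
    by (rule O.integrable_const_bound[where B=K]) (use that in auto)
  have Xb: "\<bar>X t \<omega>\<bar> \<le> 1" for t \<omega> by (simp add: X_def)
  have Zb: "\<bar>Z t \<omega>\<bar> \<le> 1" for t \<omega> by (simp add: Z_def)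
  have XZb: "\<bar>X t \<omega> * Z t \<omega>\<bar> \<le> 1" for t \<omega> by (simp add: X_def Z_def)
  have intX: "integrable \<Omega> (X t)" for t by (rule intb[OF Xm Xb])
  have intZ: "integrable \<Omega> (Z t)" for t by (rule intb[OF Zm Zb])
  have intXZ: "integrable \<Omega> (\<lambda>\<omega>. X t \<omega> * Z t \<omega>)" for t
    by (rule intb[OF _ XZb]) measurable
  have ind_b: "\<bar>indicator {0} y\<bar> \<le> (1::real)" for y :: real by simp
  have EXZ: "(\<integral>\<omega>. X t \<omega> * Z t \<omega> \<partial>\<Omega>) = q * (\<integral>\<omega>. X t \<omega> \<partial>\<Omega>)" if "t < T" for t
  proof -
    have inv: "X t (x(t:=y), c) = X t (x(t:=y'), c)" for x y y' c
    proof -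
      have "decision \<beta> T v (x(t:=y)) c t = decision \<beta> T v (x(t:=y')) c t"
        by (rule decision_dep[OF that]) simp
      then show ?thesis by (simp add: X_def D_def)
    qed
    have "(\<integral>\<omega>. X t \<omega> * indicator {0} (fst \<omega> t) \<partial>(PiM {..<T} (\<lambda>_. G) \<Otimes>\<^sub>M C))
        = (\<integral>y. indicator {0} y \<partial>G) * (\<integral>\<omega>. X t \<omega> \<partial>(PiM {..<T} (\<lambda>_. G) \<Otimes>\<^sub>M C))"
      by (rule indep_coord_pair[where h="X t" and B=1 and D=1 and \<phi>="indicator {0}"])
         (use that Xm Xb Gp Cp indG inv in \<open>auto simp: \<Omega>_def P_def\<close>)
    from this[unfolded G0] show ?thesis by (simp add: Z_def \<Omega>_def P_def)
  qed
  have EZ: "(\<integral>\<omega>. Z t \<omega> \<partial>\<Omega>) = q" if "t < T" for t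
  proof -
    have one_b: "\<bar>(\<lambda>_. 1::real) \<omega>\<bar> \<le> 1" for \<omega> :: "(nat \<Rightarrow> real) \<times> (nat \<Rightarrow> real)" by simp
    have "(\<integral>\<omega>. (\<lambda>_. 1::real) \<omega> * indicator {0} (fst \<omega> t) \<partial>(PiM {..<T} (\<lambda>_. G) \<Otimes>\<^sub>M C))
        = (\<integral>y. indicator {0} y \<partial>G) * (\<integral>\<omega>. (\<lambda>_. 1::real) \<omega> \<partial>(PiM {..<T} (\<lambda>_. G) \<Otimes>\<^sub>M C))"
      by (rule indep_coord_pair[where h="\<lambda>_. 1" and B=1 and D=1 and \<phi>="indicator {0}"])
         (use that Gp Cp indG in auto)
    from this[unfolded G0] show ?thesis using O.prob_space by (simp add: Z_def \<Omega>_def P_def)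
  qed
  define SX where "SX = (\<Sum>t<T. (\<integral>\<omega>. X t \<omega> \<partial>\<Omega>))"
  let ?f = "\<lambda>\<omega>. revenue \<beta> T v (fst \<omega>) (snd \<omega>) - \<mu> * hindsight \<rho> T v (fst \<omega>)"
  let ?g = "\<lambda>\<omega>. (\<Sum>t<T. vbar * (X t \<omega> * Z t \<omega>)) - \<mu> * (\<Sum>t<T. vbar * Z t \<omega>)"
  let ?pay = "\<lambda>\<omega>. (\<Sum>t<T. vbar * (X t \<omega> - X t \<omega> * Z t \<omega>))"
  have rev_eq: "revenue \<beta> T v (fst \<omega>) (snd \<omega>) = (\<Sum>t<T. if D t \<omega> then gain vbar (fst \<omega> t) else 0)" for \<omega>
    unfolding revenue_def D_def v_def by (intro sum.cong) auto
  have fm: "?f \<in> borel_measurable \<Omega>"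
  proof -
    have r: "(\<lambda>\<omega>. revenue \<beta> T v (fst \<omega>) (snd \<omega>)) \<in> borel_measurable \<Omega>"
      unfolding rev_eq gain_def by measurable
    have h: "(\<lambda>\<omega>. hindsight \<rho> T v (fst \<omega>)) \<in> borel_measurable \<Omega>"
      unfolding hind_Max_form[OF less_imp_le[OF rho]] v_def gain_def cost_def
      by (rule borel_measurable_Max) measurable
    show ?thesis using r h by measurable
  qed
  have gm: "?g \<in> borel_measurable \<Omega>" by measurable
  have fg: "AE \<omega> in \<Omega>. ?f \<omega> = ?g \<omega>"
  proof (rule eventually_mono[OF ae])
    fix \<omega> :: "(nat \<Rightarrow> real) \<times> (nat \<Rightarrow> real)" assume a: "\<forall>t<T. fst \<omega> t \<in> {0, vbar}"
    have "revenue \<beta> T v (fst \<omega>) (snd \<omega>) = (\<Sum>t<T. vbar * (X t \<omega> * Z t \<omega>))"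
      unfolding rev_eq using a gain_special[OF vb] by (intro sum.cong) (auto simp: X_def Z_def)
    moreover have "hindsight \<rho> T v (fst \<omega>) = (\<Sum>t<T. vbar * Z t \<omega>)"
      unfolding v_def Z_def by (rule hind_special[OF vb less_imp_le[OF rho] a])
    ultimately show "?f \<omega> = ?g \<omega>" by simp
  qed
  have payb: "AE \<omega> in \<Omega>. ?pay \<omega> \<le> \<rho> * real T"
  proof (rule eventually_mono[OF ae])
    fix \<omega> :: "(nat \<Rightarrow> real) \<times> (nat \<Rightarrow> real)" assume a: "\<forall>t<T. fst \<omega> t \<in> {0, vbar}"
    have "payment \<beta> T v (fst \<omega>) (snd \<omega>) \<le> \<rho> * real T"
    proof -
      have a2: "\<forall>t<T. fst \<omega> t \<in> {0..vbar}" using a vb by force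
      have v2: "\<forall>t<T. v t \<in> {0..vbar}" using vb by (simp add: v_def)
      show ?thesis using bf a2 v2 unfolding budget_feasible_def by blast
    qed
    moreover have "payment \<beta> T v (fst \<omega>) (snd \<omega>) = ?pay \<omega>"
      unfolding payment_def
    proof (intro sum.cong refl)
      fix t assume "t \<in> {..<T}"
      then have "t < T" by simp
      then show "(if decision \<beta> T v (fst \<omega>) (snd \<omega>) t then cost (v t) (fst \<omega> t) else 0) = vbar * (X t \<omega> - X t \<omega> * Z t \<omega>)"
        using a cost_special[OF vb] by (auto simp: X_def Z_def D_def v_def)
    qed
    ultimately show "?pay \<omega> \<le> \<rho> * real T" by simp
  qed
  have Ig: "(\<integral>\<omega>. ?g \<omega> \<partial>\<Omega>) = vbar * q * SX - \<mu> * vbar * q * real T"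
  proof -
    have "(\<integral>\<omega>. ?g \<omega> \<partial>\<Omega>) = (\<Sum>t<T. vbar * (\<integral>\<omega>. X t \<omega> * Z t \<omega> \<partial>\<Omega>)) - \<mu> * (\<Sum>t<T. vbar * (\<integral>\<omega>. Z t \<omega> \<partial>\<Omega>))"
      using intXZ intZ by (simp add: integral_sum)
    also have "\<dots> = (\<Sum>t<T. vbar * (q * (\<integral>\<omega>. X t \<omega> \<partial>\<Omega>))) - \<mu> * (\<Sum>t<T. vbar * q)"
      using EXZ EZ by simp
    also have "\<dots> = vbar * q * SX - \<mu> * vbar * q * real T"
      unfolding SX_def by (simp add: sum_distrib_left algebra_simps)
    finally show ?thesis .
  qed
  have Ipay: "(\<integral>\<omega>. ?pay \<omega> \<partial>\<Omega>) = vbar * (1 - q) * SX"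
  proof -
    have "(\<integral>\<omega>. ?pay \<omega> \<partial>\<Omega>) = (\<Sum>t<T. vbar * ((\<integral>\<omega>. X t \<omega> \<partial>\<Omega>) - (\<integral>\<omega>. X t \<omega> * Z t \<omega> \<partial>\<Omega>)))"
      using intXZ intX by (simp add: integral_sum)
    also have "\<dots> = (\<Sum>t<T. vbar * (1 - q) * (\<integral>\<omega>. X t \<omega> \<partial>\<Omega>))"
      using EXZ by (intro sum.cong) (auto simp: algebra_simps)
    also have "\<dots> = vbar * (1 - q) * SX"
      unfolding SX_def by (simp add: sum_distrib_left)
    finally show ?thesis .
  qed
  have intpay: "integrable \<Omega> ?pay" using intXZ intX by simp
  have budget: "vbar * (1 - q) * SX \<le> \<rho> * real T"
    using O.integral_le_const[OF intpay payb] Ipay by simp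
  have SXb: "vbar * SX \<le> \<rho> * real T / (1 - q)"
    using budget q by (simp add: pos_le_divide_eq algebra_simps)
  have "objective \<rho> \<mu> \<beta> Gam T v G = (1 / real T) * (vbar * q * SX - \<mu> * vbar * q * real T)"
    unfolding objective_def \<Omega>_eq using integral_cong_AE[OF fm gm fg] Ig by simp
  also have "\<dots> = q * (vbar * SX) / real T - \<mu> * vbar * q"
    using T by (simp add: field_simps)
  also have "\<dots> \<le> q * (\<rho> * real T / (1 - q)) / real T - \<mu> * vbar * q"
    using SXb q T by (intro diff_right_mono divide_right_mono mult_left_mono) auto
  also have "\<dots> = q * \<rho> / (1 - q) - \<mu> * vbar * q"
    using T by simp
  finally show ?thesis unfolding v_def .
qed

theorem theorem2:
  fixes vbar \<rho> \<mu> :: real and \<beta> :: strategy and Gam :: "nat \<Rightarrow> real measure"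
  assumes "vbar > 0" and "\<rho> > 0" and "\<rho> \<le> vbar"
    and "\<forall>T. prob_space (Gam T) \<and> sets (Gam T) = sets borel"
    and "budget_feasible vbar \<rho> \<beta>"
    and "measurable_strategy \<beta> Gam"
    and "\<mu> > \<rho> / vbar"
  shows "liminf (\<lambda>T. ereal (worst_case vbar \<rho> \<mu> \<beta> Gam T)) < 0"
proof -
  have vb: "vbar > 0" and rho: "\<rho> > 0" using assms by auto
  have Gam: "prob_space (Gam T)" "sets (Gam T) = sets borel" for T using assms(4) by auto
  have a: "\<mu> * vbar > \<rho>" using assms(7) vb by (simp add: pos_divide_less_eq)
  have mu: "\<mu> > 0" using a vb rho by (smt (verit) mult_nonpos_nonneg)
  define q where "q = (\<mu> * vbar - \<rho>) / (2 * (\<mu> * vbar))"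
  have apos: "\<mu> * vbar > 0" using mu vb by simp
  have q0: "0 < q" unfolding q_def using a apos by simp
  have q1: "q < 1" unfolding q_def using a apos rho by (simp add: divide_less_eq)
  have omq: "1 - q = (\<mu> * vbar + \<rho>) / (2 * (\<mu> * vbar))"
  proof -
    have "\<mu> \<noteq> 0" "vbar \<noteq> 0" using mu vb by auto
    then show ?thesis unfolding q_def by (simp add: field_simps)
  qed
  have qq: "\<rho> / (1 - q) < \<mu> * vbar"
  proof -
    have "\<rho> / (1 - q) = 2 * (\<mu> * vbar) * \<rho> / (\<mu> * vbar + \<rho>)"
      unfolding omq using apos rho by (simp add: field_simps)
    also have "\<dots> < \<mu> * vbar"
    proof -
      have h: "\<mu> * vbar * \<rho> < \<mu> * vbar * (\<mu> * vbar)" by (rule mult_strict_left_mono[OF a apos])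
      show ?thesis using h apos rho by (simp add: pos_divide_less_eq algebra_simps)
    qed
    finally show ?thesis .
  qed
  define c where "c = q * (\<mu> * vbar - \<rho> / (1 - q))"
  have c0: "c > 0" unfolding c_def using q0 qq by simp
  have key: "worst_case vbar \<rho> \<mu> \<beta> Gam T \<le> - c" if T: "T > 0" for T
  proof -
    define G where "G = distr (measure_pmf (bernoulli_pmf q)) borel (\<lambda>b. if b then 0 else vbar)"
    have Gp: "prob_space G" unfolding G_def
      by (rule measure_pmf.prob_space_distr) simp
    have "emeasure G {0..vbar} = emeasure (measure_pmf (bernoulli_pmf q)) ((\<lambda>b. if b then 0 else vbar) -` {0..vbar} \<inter> UNIV)"
      unfolding G_def by (subst emeasure_distr) auto
    also have "(\<lambda>b. if b then 0 else vbar) -` {0..vbar} \<inter> UNIV = UNIV" using vb by auto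
    also have "emeasure (measure_pmf (bernoulli_pmf q)) UNIV = 1"
      using measure_pmf.emeasure_space_1[of "bernoulli_pmf q"] by simp
    finally have G1: "emeasure G {0..vbar} = 1" .
    have dG: "distr_on vbar G" unfolding distr_on_def using Gp G1 by (simp add: G_def)
    let ?S = "{(v, G). (\<forall>t<T. v t \<in> {0..vbar}) \<and> distr_on vbar G}"
    let ?o = "\<lambda>vG. objective \<rho> \<mu> \<beta> Gam T (fst vG) (snd vG)"
    have mem: "((\<lambda>_. vbar), G) \<in> ?S" using dG vb by auto
    have bdd: "bdd_below (?o ` ?S)"
    proof (rule bdd_belowI2)
      fix vG assume "vG \<in> ?S"
      then show "- (\<mu> * vbar) \<le> ?o vG"
        using objective_lower[of vbar \<rho> \<mu> Gam T "snd vG" "fst vG" \<beta>] vb rho mu Gam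
        by (auto simp: case_prod_beta)
    qed
    have "worst_case vbar \<rho> \<mu> \<beta> Gam T \<le> ?o ((\<lambda>_. vbar), G)"
      unfolding worst_case_def by (rule cINF_lower[OF bdd mem])
    also have "\<dots> \<le> q * \<rho> / (1 - q) - \<mu> * vbar * q"
      using objective_upper[OF vb rho q0 q1 T Gam(1) Gam(2) assms(5) assms(6) G_def] by simp
    also have "\<dots> = - c" unfolding c_def by (simp add: algebra_simps)
    finally show ?thesis .
  qed
  have "liminf (\<lambda>T. ereal (worst_case vbar \<rho> \<mu> \<beta> Gam T)) \<le> ereal (- c)"
  proof (rule Liminf_le)
    show "eventually (\<lambda>T. ereal (worst_case vbar \<rho> \<mu> \<beta> Gam T) \<le> ereal (- c)) sequentially"
      using key unfolding eventually_sequentially by (intro exI[of _ 1]) auto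
  qed simp
  also have "ereal (- c) < 0" using c0 by simp
  finally show ?thesis .
qed

end
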